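(* Let $\mathcal{N}$ be an acyclic, deterministic, sound negotiation, and let $m,n$ be two nodes with $\mathit{dom}(m)\cap\mathit{dom}(n)=\emptyset$. Then $m\parallel n$ if and only if there exists a run from $C_{\mathit{init}}$ containing both $m$ and $n$, and there is neither a local path from $m$ to $n$ nor a local path from $n$ to $m$.
   Context: A negotiation is a tuple $\mathcal{N}=(\mathit{Proc},N,\mathit{dom},R,\delta)$ where $\mathit{Proc}$ is a finite set of processes, $N$ is a finite set of nodes, $\mathit{dom}:N\to 2^{\mathit{Proc}}\setminus\{\emptyset\}$, there are two distinguished nodes $n_{\mathit{init}},n_{\mathit{fin}}$ with $\mathit{dom}(n_{\mathit{init}})=\mathit{dom}(n_{\mathit{fin}})=\mathit{Proc}$, $R$ is a set of results, each node $n$ has a set $\mathit{out}(n)\subseteq R$ of results (nonempty for $n\neq n_{\mathit{fin}}$), and $\delta(n,a,p)\subseteq N$ is defined and nonempty exactly when $a\in\mathit{out}(n)$ and $p\in\mathit{dom}(n)$, with $p\in\mathit{dom}(n')$ for all $n'\in\delta(n,a,p)$. $\mathcal{N}$ is deterministic if every $\delta(n,a,p)$ is a singleton. A configuration is a map $C$ assigning to each process a nonempty set of nodes; $C_{\mathit{init}}(p)=\{n_{\mathit{init}}\}$, $C_{\mathit{fin}}(p)=\{n_{\mathit{fin}}\}$. A node $n$ is enabled in $C$ if $n\in C(p)$ for all $p\in\mathit{dom}(n)$. If $n$ is enabled and $a\in\mathit{out}(n)$ then $C\xrightarrow{(n,a)}C'$ with $C'(p)=\delta(n,a,p)$ for $p\in\mathit{dom}(n)$,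 $C'(p)=C(p)$ otherwise. A run is a sequence $(n_1,a_1)(n_2,a_2)\cdots$ of such steps, and it contains $n$ if $n=n_i$ for some $i$; a configuration is reachable if some finite run from $C_{\mathit{init}}$ leads to it; $\mathcal{N}$ is sound if every finite run from $C_{\mathit{init}}$ can be extended to a finite run ending in $C_{\mathit{fin}}$. The graph of $\mathcal{N}$ has vertex set $N$ and edges $n\xrightarrow{p,a}n'$ whenever $n'\in\delta(n,a,p)$; $\mathcal{N}$ is acyclic if this graph is; a local path is a path in this graph. $m\parallel n$ means $\mathit{dom}(m)\cap\mathit{dom}(n)=\emptyset$ and some reachable configuration enables both $m$ and $n$. *)

theory Defs
  imports Main
begin

text \<open>A negotiation over processes 'p, nodes 'n and results 'r.
  The transition function is total in HOL; we require it to be empty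
  wherever it is undefined in the paper.\<close>

record ('p, 'n, 'r) negotiation =
  Proc :: "'p set"
  Nodes :: "'n set"
  ndom :: "'n \<Rightarrow> 'p set"
  Res :: "'r set"
  out :: "'n \<Rightarrow> 'r set"
  delta :: "'n \<Rightarrow> 'r \<Rightarrow> 'p \<Rightarrow> 'n set"
  ninit :: 'n
  nfin :: 'n

definition wf_negotiation :: "('p, 'n, 'r) negotiation \<Rightarrow> bool" where
  "wf_negotiation N \<longleftrightarrow>
     finite (Proc N) \<and> finite (Nodes N) \<and>
     ninit N \<in> Nodes N \<and> nfin N \<in> Nodes N \<and> ninit N \<noteq> nfin N \<and>
     (\<forall>n\<in>Nodes N. ndom N n \<subseteq> Proc N \<and> ndom N n \<noteq> {}) \<and>
     ndom N (ninit N) = Proc N \<and> ndom N (nfin N) = Proc N \<and>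
     (\<forall>n\<in>Nodes N. out N n \<subseteq> Res N) \<and>
     (\<forall>n\<in>Nodes N. n \<noteq> nfin N \<longrightarrow> out N n \<noteq> {}) \<and>
     (\<forall>n a p. (n \<in> Nodes N \<and> a \<in> out N n \<and> p \<in> ndom N n) \<longrightarrow>
        delta N n a p \<noteq> {} \<and> delta N n a p \<subseteq> Nodes N \<and>
        (\<forall>n'\<in>delta N n a p. p \<in> ndom N n')) \<and>
     (\<forall>n a p. \<not> (n \<in> Nodes N \<and> a \<in> out N n \<and> p \<in> ndom N n) \<longrightarrow>
        delta N n a p = {})"

definition deterministic :: "('p, 'n, 'r) negotiation \<Rightarrow> bool" where
  "deterministic N \<longleftrightarrow>
     (\<forall>n\<in>Nodes N. \<forall>a\<in>out N n. \<forall>p\<in>ndom N n. \<exists>n'. delta N n a p = {n'})"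

type_synonym ('p, 'n) config = "'p \<Rightarrow> 'n set"

definition Cinit :: "('p, 'n, 'r) negotiation \<Rightarrow> ('p, 'n) config" where
  "Cinit N = (\<lambda>p. if p \<in> Proc N then {ninit N} else {})"

definition Cfin :: "('p, 'n, 'r) negotiation \<Rightarrow> ('p, 'n) config" where
  "Cfin N = (\<lambda>p. if p \<in> Proc N then {nfin N} else {})"

definition enabled :: "('p, 'n, 'r) negotiation \<Rightarrow> ('p, 'n) config \<Rightarrow> 'n \<Rightarrow> bool" where
  "enabled N C n \<longleftrightarrow> n \<in> Nodes N \<and> (\<forall>p\<in>ndom N n. n \<in> C p)"

definition step :: "('p, 'n, 'r) negotiation \<Rightarrow> ('p, 'n) config \<Rightarrow> 'n \<times> 'r \<Rightarrow> ('p, 'n) config \<Rightarrow> bool" where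
  "step N C x C' \<longleftrightarrow> enabled N C (fst x) \<and> snd x \<in> out N (fst x) \<and>
     C' = (\<lambda>p. if p \<in> ndom N (fst x) then delta N (fst x) (snd x) p else C p)"

fun run_from :: "('p, 'n, 'r) negotiation \<Rightarrow> ('p, 'n) config \<Rightarrow> ('n \<times> 'r) list \<Rightarrow> ('p, 'n) config \<Rightarrow> bool" where
  "run_from N C [] C' \<longleftrightarrow> C' = C"
| "run_from N C (x # w) C' \<longleftrightarrow> (\<exists>C''. step N C x C'' \<and> run_from N C'' w C')"

definition reachable :: "('p, 'n, 'r) negotiation \<Rightarrow> ('p, 'n) config \<Rightarrow> bool" where
  "reachable N C \<longleftrightarrow> (\<exists>w. run_from N (Cinit N) w C)"

definition sound :: "('p, 'n, 'r) negotiation \<Rightarrow> bool" where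
  "sound N \<longleftrightarrow> (\<forall>w C. run_from N (Cinit N) w C \<longrightarrow> (\<exists>v. run_from N C v (Cfin N)))"

definition edge :: "('p, 'n, 'r) negotiation \<Rightarrow> 'n \<Rightarrow> 'n \<Rightarrow> bool" where
  "edge N n n' \<longleftrightarrow> (\<exists>a p. n \<in> Nodes N \<and> a \<in> out N n \<and> p \<in> ndom N n \<and> n' \<in> delta N n a p)"

definition acyclic_neg :: "('p, 'n, 'r) negotiation \<Rightarrow> bool" where
  "acyclic_neg N \<longleftrightarrow> (\<forall>n. \<not> (edge N)\<^sup>+\<^sup>+ n n)"

definition local_path :: "('p, 'n, 'r) negotiation \<Rightarrow> 'n \<Rightarrow> 'n \<Rightarrow> bool" where
  "local_path N m n \<longleftrightarrow> (edge N)\<^sup>*\<^sup>* m n"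

definition par :: "('p, 'n, 'r) negotiation \<Rightarrow> 'n \<Rightarrow> 'n \<Rightarrow> bool" where
  "par N m n \<longleftrightarrow> ndom N m \<inter> ndom N n = {} \<and>
     (\<exists>C. reachable N C \<and> enabled N C m \<and> enabled N C n)"

definition run_contains :: "('n \<times> 'r) list \<Rightarrow> 'n \<Rightarrow> bool" where
  "run_contains w n \<longleftrightarrow> n \<in> fst ` set w"

end

theory Submission
  imports Defs
begin

lemma run_append: "run_from N C (u@v) C' \<longleftrightarrow> (\<exists>D. run_from N C u D \<and> run_from N D v C')"
  by (induction u arbitrary: C) auto

lemma step_pair: "step N C (x,a) C' \<longleftrightarrow> enabled N C x \<and> a \<in> out N x \<and>
   C' = (\<lambda>p. if p \<in> ndom N x then delta N x a p else C p)"
  unfolding step_def fst_conv snd_conv by (rule refl)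

lemma stepD: "step N C s C' \<Longrightarrow> enabled N C (fst s) \<and> snd s \<in> out N (fst s) \<and>
  (\<forall>p. C' p = (if p \<in> ndom N (fst s) then delta N (fst s) (snd s) p else C p))"
  unfolding step_def by simp

lemma wf_fin: "wf_negotiation N \<Longrightarrow> ndom N (nfin N) = Proc N"
  unfolding wf_negotiation_def by (elim conjE) assumption

lemma wf_out: "wf_negotiation N \<Longrightarrow> n \<in> Nodes N \<Longrightarrow> n \<noteq> nfin N \<Longrightarrow> out N n \<noteq> {}"
  unfolding wf_negotiation_def by blast

lemma wf_dom0: "wf_negotiation N \<Longrightarrow> (\<forall>n\<in>Nodes N. ndom N n \<subseteq> Proc N \<and> ndom N n \<noteq> {})"
  unfolding wf_negotiation_def by (elim conjE) assumption

lemma wf_dom: "wf_negotiation N \<Longrightarrow> n \<in> Nodes N \<Longrightarrow> ndom N n \<subseteq> Proc N \<and> ndom N n \<noteq> {}"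
  using wf_dom0 by blast

lemma wf_delta: "wf_negotiation N \<Longrightarrow> n \<in> Nodes N \<Longrightarrow> a \<in> out N n \<Longrightarrow> p \<in> ndom N n
  \<Longrightarrow> n' \<in> delta N n a p \<Longrightarrow> p \<in> ndom N n'"
  unfolding wf_negotiation_def by blast

lemma pos: "run_from N C u C' \<Longrightarrow> y \<in> C' q \<Longrightarrow> \<exists>x\<in>C q. (edge N)\<^sup>*\<^sup>* x y"
proof (induction u arbitrary: C)
  case Nil then show ?case by auto
next
  case (Cons s u)
  then obtain C'' where st: "step N C s C''" and r: "run_from N C'' u C'" by auto
  from Cons.IH[OF r Cons.prems(2)] obtain x where x: "x \<in> C'' q" "(edge N)\<^sup>*\<^sup>* x y" by auto
  show ?case
  proof (cases "q \<in> ndom N (fst s)")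
    case True
    from stepD[OF st] have sd: "enabled N C (fst s)" "snd s \<in> out N (fst s)"
      "C'' q = delta N (fst s) (snd s) q" using True by auto
    with x have xd: "x \<in> delta N (fst s) (snd s) q" by simp
    from sd(1) have "fst s \<in> Nodes N" "fst s \<in> C q" using True unfolding enabled_def by auto
    with xd sd(2) True have "edge N (fst s) x" "fst s \<in> C q"
      unfolding edge_def by blast+
    then show ?thesis using x by (meson converse_rtranclp_into_rtranclp)
  next
    case False
    from stepD[OF st] False have "C'' q = C q" by auto
    with x show ?thesis by auto
  qed
qed

lemma singl: "wf_negotiation N \<Longrightarrow> deterministic N \<Longrightarrow> run_from N C u C' \<Longrightarrow>
  (\<forall>p\<in>Proc N. \<exists>x. C p = {x}) \<Longrightarrow> (\<forall>p\<in>Proc N. \<exists>x. C' p = {x})"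
proof (induction u arbitrary: C)
  case Nil then show ?case by auto
next
  case (Cons s u)
  then obtain C'' where st: "step N C s C''" and r: "run_from N C'' u C'" by auto
  have "\<forall>p\<in>Proc N. \<exists>x. C'' p = {x}"
  proof
    fix p assume p: "p \<in> Proc N"
    show "\<exists>x. C'' p = {x}"
    proof (cases "p \<in> ndom N (fst s)")
      case True
      have sd: "enabled N C (fst s)" "snd s \<in> out N (fst s)"
        "\<forall>p. C'' p = (if p \<in> ndom N (fst s) then delta N (fst s) (snd s) p else C p)"
        using stepD[OF st] by blast+
      have n: "fst s \<in> Nodes N" using sd(1) unfolding enabled_def by blast
      have c: "C'' p = delta N (fst s) (snd s) p" using sd(3) True by simp
      have "\<exists>n'. delta N (fst s) (snd s) p = {n'}"
        using Cons.prems(2) n sd(2) True unfolding deterministic_def by blast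
      then show ?thesis using c by simp
    next
      case False
      with stepD[OF st] have "C'' p = C p" by auto
      with p Cons.prems(4) show ?thesis by auto
    qed
  qed
  with Cons.IH[OF Cons.prems(1,2) r] show ?case by blast
qed

lemma firstfire: "run_from N C u C' \<Longrightarrow> C p = {z} \<Longrightarrow> C' p \<noteq> {z} \<Longrightarrow>
   \<exists>u1 D. run_from N C u1 D \<and> enabled N D z"
proof (induction u arbitrary: C)
  case Nil then show ?case by auto
next
  case (Cons s u)
  then obtain C'' where st: "step N C s C''" and r: "run_from N C'' u C'" by auto
  show ?case
  proof (cases "p \<in> ndom N (fst s)")
    case True
    have "enabled N C (fst s)" using stepD[OF st] by blast
    with True Cons.prems(2) have "fst s = z" unfolding enabled_def by auto
    with \<open>enabled N C (fst s)\<close> have "run_from N C [] C \<and> enabled N C z" by simp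
    then show ?thesis by blast
  next
    case False
    with stepD[OF st] Cons.prems(2) have "C'' p = {z}" by auto
    from Cons.IH[OF r this Cons.prems(3)] obtain u1 D where "run_from N C'' u1 D" "enabled N D z" by auto
    with st have "run_from N C (s#u1) D" by auto
    then show ?thesis using \<open>enabled N D z\<close> by blast
  qed
qed

lemma L:
  assumes wf: "wf_negotiation N" and det: "deterministic N" and snd: "sound N"
  shows "(edge N)\<^sup>*\<^sup>* x y \<Longrightarrow> run_from N (Cinit N) w C \<Longrightarrow> enabled N C x \<Longrightarrow>
    \<exists>v C'. run_from N C v C' \<and> enabled N C' y"
proof (induction rule: rtranclp_induct)
  case base
  then show ?case by (intro exI[of _ "[]"]) auto
next
  case (step y z)
  then obtain v C' where v: "run_from N C v C'" "enabled N C' y" by blast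
  from step.hyps(2) obtain a p where e: "y \<in> Nodes N" "a \<in> out N y" "p \<in> ndom N y" "z \<in> delta N y a p"
    unfolding edge_def by blast
  with det have dz: "delta N y a p = {z}" unfolding deterministic_def by fastforce
  define C'' where "C'' = (\<lambda>q. if q \<in> ndom N y then delta N y a q else C' q)"
  have st: "step N C' (y,a) C''" using v e by (simp add: step_pair C''_def)
  have pz: "C'' p = {z}" using dz e by (simp add: C''_def)
  have r1: "run_from N C (v@[(y,a)]) C''" using v st by (auto simp: run_append)
  have "run_from N (Cinit N) (w@v@[(y,a)]) C''" using r1 step.prems(1) by (auto simp: run_append)
  with snd obtain u where u: "run_from N C'' u (Cfin N)" unfolding sound_def by blast
  show ?case
  proof (cases "z = nfin N")
    case True
    have "enabled N (Cfin N) z" using True wf unfolding enabled_def Cfin_def wf_negotiation_def by auto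
    moreover have "run_from N C (v@[(y,a)]@u) (Cfin N)" using r1 u by (auto simp: run_append)
    ultimately show ?thesis by blast
  next
    case False
    have "p \<in> Proc N" using wf_dom[OF wf e(1)] e(3) by blast
    then have "Cfin N p \<noteq> {z}" using False by (auto simp: Cfin_def)
    from firstfire[OF u pz this] obtain u1 D where "run_from N C'' u1 D" "enabled N D z" by blast
    moreover have "run_from N C (v@[(y,a)]@u1) D" using r1 \<open>run_from N C'' u1 D\<close> by (auto simp: run_append)
    ultimately show ?thesis by blast
  qed
qed

lemma Cinit_singl: "\<forall>p\<in>Proc N. \<exists>x. Cinit N p = {x}" by (simp add: Cinit_def)

lemma nopath:
  assumes wf: "wf_negotiation N" and det: "deterministic N" and snd: "sound N"
    and ac: "acyclic_neg N" and r: "run_from N (Cinit N) w C"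
    and em: "enabled N C m" and en: "enabled N C n" and mn: "m \<noteq> n"
  shows "\<not> (edge N)\<^sup>*\<^sup>* m n"
proof
  assume "(edge N)\<^sup>*\<^sup>* m n"
  then obtain y where y: "(edge N)\<^sup>*\<^sup>* m y" "edge N y n" using mn
    by (metis rtranclp.cases)
  from L[OF wf det snd y(1) r em] obtain v C' where v: "run_from N C v C'" "enabled N C' y" by blast
  from y(2) obtain a q where e: "y \<in> Nodes N" "a \<in> out N y" "q \<in> ndom N y" "n \<in> delta N y a q"
    unfolding edge_def by blast
  have qn: "q \<in> ndom N n" using wf_delta[OF wf e] .
  have yq: "y \<in> C' q" using v(2) e(3) unfolding enabled_def by auto
  from pos[OF v(1) yq] obtain x where x: "x \<in> C q" "(edge N)\<^sup>*\<^sup>* x y" by blast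
  have "q \<in> Proc N" using wf_dom[OF wf e(1)] e(3) by blast
  with singl[OF wf det r Cinit_singl] obtain x0 where "C q = {x0}" by blast
  moreover have "n \<in> C q" using en qn unfolding enabled_def by auto
  ultimately have "x = n" using x by auto
  with x y(2) have "(edge N)\<^sup>+\<^sup>+ n n" by (meson rtranclp_into_tranclp1)
  with ac show False unfolding acyclic_neg_def by blast
qed

lemma R: "run_from N C u C' \<Longrightarrow> (\<forall>q\<in>T. \<forall>x\<in>C q. (edge N)\<^sup>*\<^sup>* m x) \<Longrightarrow> (\<forall>q. q\<notin>T \<longrightarrow> E q = C q) \<Longrightarrow>
  \<exists>v E' T'. run_from N E v E' \<and> T \<subseteq> T' \<and> (\<forall>q\<in>T'. \<forall>x\<in>C' q. (edge N)\<^sup>*\<^sup>* m x)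
     \<and> (\<forall>q. q\<notin>T' \<longrightarrow> E' q = C' q) \<and> (\<forall>q\<in>T. E' q = E q)"
proof (induction u arbitrary: C T E)
  case Nil then show ?case by (intro exI[of _ "[]"] exI[of _ E] exI[of _ T]) auto
next
  case (Cons s u)
  then obtain C1 where st: "step N C s C1" and r: "run_from N C1 u C'" by auto
  obtain x a where s: "s = (x,a)" by fastforce
  have en: "enabled N C x" "a \<in> out N x" and C1: "C1 = (\<lambda>p. if p \<in> ndom N x then delta N x a p else C p)"
  proof -
    have "step N C (x,a) C1" using st s by simp
    then show "enabled N C x" "a \<in> out N x" "C1 = (\<lambda>p. if p \<in> ndom N x then delta N x a p else C p)"
      by (simp_all add: step_pair)
  qed
  show ?case
  proof (cases "ndom N x \<inter> T = {}")
    case False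
    then obtain q where q: "q \<in> ndom N x" "q \<in> T" by blast
    then have "x \<in> C q" using en unfolding enabled_def by auto
    then have mx: "(edge N)\<^sup>*\<^sup>* m x" using Cons.prems(2) q by blast
    have inv: "\<forall>q\<in>T \<union> ndom N x. \<forall>y\<in>C1 q. (edge N)\<^sup>*\<^sup>* m y"
    proof (intro ballI)
      fix q' y assume q': "q' \<in> T \<union> ndom N x" and y: "y \<in> C1 q'"
      show "(edge N)\<^sup>*\<^sup>* m y"
      proof (cases "q' \<in> ndom N x")
        case True
        then have "edge N x y" using y en unfolding C1 edge_def enabled_def by auto
        then show ?thesis using mx by (meson rtranclp.rtrancl_into_rtrancl)
      next
        case False
        then show ?thesis using q' y Cons.prems(2) unfolding C1 by auto
      qed
    qed
    have e2: "\<forall>q. q \<notin> T \<union> ndom N x \<longrightarrow> E q = C1 q" using Cons.prems(3) unfolding C1 by auto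
    from Cons.IH[OF r inv e2] obtain v E' T' where h1:
      "run_from N E v E'" "T \<union> ndom N x \<subseteq> T'" "(\<forall>q\<in>T'. \<forall>x\<in>C' q. (edge N)\<^sup>*\<^sup>* m x)"
      "(\<forall>q. q\<notin>T' \<longrightarrow> E' q = C' q)" "(\<forall>q\<in>T \<union> ndom N x. E' q = E q)" by blast
    have "T \<subseteq> T'" using h1(2) by blast
    moreover have "\<forall>q\<in>T. E' q = E q" using h1(5) by blast
    ultimately show ?thesis using h1(1,3,4) by blast
  next
    case True
    define E1 where "E1 = (\<lambda>p. if p \<in> ndom N x then delta N x a p else E p)"
    have "enabled N E x" using en(1) True Cons.prems(3) unfolding enabled_def by auto
    then have stE: "step N E (x,a) E1" using en(2) by (simp add: step_pair E1_def)
    have inv: "\<forall>q\<in>T. \<forall>y\<in>C1 q. (edge N)\<^sup>*\<^sup>* m y" using Cons.prems(2) True unfolding C1 by auto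
    have e2: "\<forall>q. q \<notin> T \<longrightarrow> E1 q = C1 q" using Cons.prems(3) unfolding C1 E1_def by auto
    from Cons.IH[OF r inv e2] obtain v E' T' where
      h: "run_from N E1 v E'" "T \<subseteq> T'" "(\<forall>q\<in>T'. \<forall>x\<in>C' q. (edge N)\<^sup>*\<^sup>* m x)"
     "(\<forall>q. q\<notin>T' \<longrightarrow> E' q = C' q)" "(\<forall>q\<in>T. E' q = E1 q)" by blast
    have "run_from N E ((x,a)#v) E'" using stE h(1) by auto
    moreover have "\<forall>q\<in>T. E' q = E q"
    proof
      fix q assume "q \<in> T"
      then show "E' q = E q" using h(5) True unfolding E1_def by auto
    qed
    ultimately show ?thesis using h(2,3,4) by blast
  qed
qed

lemma Main:
  assumes r: "run_from N (Cinit N) (w1 @ (m,a) # w2) C" and nin: "n \<in> fst ` set w2"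
    and np: "\<not> (edge N)\<^sup>*\<^sup>* m n"
  shows "\<exists>E. reachable N E \<and> enabled N E m \<and> enabled N E n"
proof -
  from r obtain D D1 where r1: "run_from N (Cinit N) w1 D" and st: "step N D (m,a) D1"
    and r2: "run_from N D1 w2 C" by (auto simp: run_append)
  from nin obtain b where "(n,b) \<in> set w2" by auto
  then obtain w5 w6 where "w2 = w5 @ (n,b) # w6" by (meson split_list)
  with r2 obtain D2 D3 where r5: "run_from N D1 w5 D2" and st2: "step N D2 (n,b) D3"
    by (auto simp: run_append)
  have enn: "enabled N D2 n" using stepD[OF st2] by simp
  have enm: "enabled N D m" using stepD[OF st] by simp
  have D1: "D1 = (\<lambda>p. if p \<in> ndom N m then delta N m a p else D p)" "a \<in> out N m"
    using st by (simp_all add: step_pair)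
  have inv: "\<forall>q\<in>ndom N m. \<forall>x\<in>D1 q. (edge N)\<^sup>*\<^sup>* m x"
    using D1 enm unfolding edge_def enabled_def by auto
  have e: "\<forall>q. q \<notin> ndom N m \<longrightarrow> D q = D1 q" using D1 by auto
  from R[OF r5 inv e] obtain v E' T' where h: "run_from N D v E'"
    "\<forall>q\<in>T'. \<forall>x\<in>D2 q. (edge N)\<^sup>*\<^sup>* m x" "\<forall>q. q\<notin>T' \<longrightarrow> E' q = D2 q" "\<forall>q\<in>ndom N m. E' q = D q"
    by blast
  have "run_from N (Cinit N) (w1 @ v) E'" using r1 h(1) by (auto simp: run_append)
  then have "reachable N E'" unfolding reachable_def by blast
  moreover have "enabled N E' m" using enm h(4) unfolding enabled_def by auto
  moreover have "enabled N E' n"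
    unfolding enabled_def
  proof (intro conjI ballI)
    show "n \<in> Nodes N" using enn unfolding enabled_def by auto
  next
    fix p assume p: "p \<in> ndom N n"
    then have nD: "n \<in> D2 p" using enn unfolding enabled_def by auto
    have "p \<notin> T'" using h(2) nD np by blast
    then show "n \<in> E' p" using h(3) nD by auto
  qed
  ultimately show ?thesis by blast
qed

theorem proposition6p3:
  fixes N :: "('p, 'n, 'r) negotiation" and m n :: 'n
  assumes "wf_negotiation N" and "acyclic_neg N" and "deterministic N" and "sound N"
    and "m \<in> Nodes N" and "n \<in> Nodes N"
    and "ndom N m \<inter> ndom N n = {}"
  shows "par N m n \<longleftrightarrow>
     ((\<exists>w C. run_from N (Cinit N) w C \<and> run_contains w m \<and> run_contains w n) \<and>
      \<not> local_path N m n \<and> \<not> local_path N n m)"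
proof
  have mn: "m \<noteq> n" using wf_dom[OF assms(1) assms(5)] assms(7) by auto
  assume "par N m n"
  then obtain C w where r: "run_from N (Cinit N) w C" and em: "enabled N C m" and en: "enabled N C n"
    unfolding par_def reachable_def by blast
  have fd: "ndom N (nfin N) = Proc N" using wf_fin[OF assms(1)] .
  have nf: "m \<noteq> nfin N" "n \<noteq> nfin N"
    using wf_dom[OF assms(1) assms(5)] wf_dom[OF assms(1) assms(6)] assms(7) fd by auto
  obtain a b where ab: "a \<in> out N m" "b \<in> out N n"
    using wf_out[OF assms(1,5) nf(1)] wf_out[OF assms(1,6) nf(2)] by blast
  define C1 where "C1 = (\<lambda>p. if p \<in> ndom N m then delta N m a p else C p)"
  define C2 where "C2 = (\<lambda>p. if p \<in> ndom N n then delta N n b p else C1 p)"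
  have s1: "step N C (m,a) C1" using em ab by (simp add: step_pair C1_def)
  have "enabled N C1 n" using en assms(7) unfolding enabled_def C1_def by auto
  then have s2: "step N C1 (n,b) C2" using ab by (simp add: step_pair C2_def)
  have "run_from N (Cinit N) (w @ [(m,a),(n,b)]) C2" using r s1 s2 by (auto simp: run_append)
  moreover have "run_contains (w @ [(m,a),(n,b)]) m" "run_contains (w @ [(m,a),(n,b)]) n"
    unfolding run_contains_def by force+
  ultimately have "\<exists>w C. run_from N (Cinit N) w C \<and> run_contains w m \<and> run_contains w n" by blast
  moreover have "\<not> local_path N m n" using nopath[OF assms(1,3,4,2) r em en mn]
    unfolding local_path_def .
  moreover have "\<not> local_path N n m" using nopath[OF assms(1,3,4,2) r en em] mn
    unfolding local_path_def by auto
  ultimately show "(\<exists>w C. run_from N (Cinit N) w C \<and> run_contains w m \<and> run_contains w n) \<and>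
      \<not> local_path N m n \<and> \<not> local_path N n m" by blast
next
  have mn: "m \<noteq> n" using wf_dom[OF assms(1) assms(5)] assms(7) by auto
  assume h: "(\<exists>w C. run_from N (Cinit N) w C \<and> run_contains w m \<and> run_contains w n) \<and>
      \<not> local_path N m n \<and> \<not> local_path N n m"
  have np1: "\<not> (edge N)\<^sup>*\<^sup>* m n" and np2: "\<not> (edge N)\<^sup>*\<^sup>* n m"
    using h unfolding local_path_def by simp_all
  from h obtain w C where r: "run_from N (Cinit N) w C" and cm: "m \<in> fst ` set w" and cn: "n \<in> fst ` set w"
    unfolding run_contains_def by blast
  from cm obtain a where "(m,a) \<in> set w" by auto
  then obtain w1 w2 where w: "w = w1 @ (m,a) # w2" by (meson split_list)
  have "\<exists>E. reachable N E \<and> enabled N E m \<and> enabled N E n"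
  proof (cases "n \<in> fst ` set w2")
    case True
    have r0: "run_from N (Cinit N) (w1 @ (m,a) # w2) C" using r w by simp
    show ?thesis using Main[OF r0 True np1] .
  next
    case False
    with cn w mn have "n \<in> fst ` set w1" by auto
    then obtain b where "(n,b) \<in> set w1" by auto
    then obtain w3 w4 where w1: "w1 = w3 @ (n,b) # w4" by (meson split_list)
    have r': "run_from N (Cinit N) (w3 @ (n,b) # (w4 @ (m,a) # w2)) C" using r w w1 by simp
    have "m \<in> fst ` set (w4 @ (m,a) # w2)" by force
    from Main[OF r' this np2] obtain E where "reachable N E" "enabled N E n" "enabled N E m" by blast
    then show ?thesis by blast
  qed
  then show "par N m n" unfolding par_def using assms(7) by blast
qed

end
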